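(* Consider the model in which one observes $(Y_t)_{t\in[0,1]}$ with $dY_t=2\sqrt{f(t)}\,dt+n^{-1/2}dW_t$, $W$ a standard Brownian motion, and let $\mathbb P_f$ be the law of the data. Let $\mathcal G=\{f:[0,1]\to\mathbb R:\ f\ge0,\ f(x)=ax+b\text{ with }|a|+|b|\le2\}$. Then there exists $C>0$ such that $$\liminf_{n\to\infty}\ \inf_{\widehat f_n}\ \sup_{f\in\mathcal G:\ f(0)\le n^{-1/2}}\ \mathbb P_f\Big(\frac{|\widehat f_n(0)-f(0)|}{(n\log n)^{-1/2}}\ge C\Big)>0,$$ where the infimum is over all measurable estimators of $f(0)$ based on the data. *)

theory Defs
  imports "HOL-Probability.Probability"
begin

definition data_space :: "(real \<Rightarrow> real) measure" where
  "data_space = PiM {0..1} (\<lambda>_. (borel :: real measure))"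

definition drift :: "(real \<Rightarrow> real) \<Rightarrow> real \<Rightarrow> real" where
  "drift f t = integral {0..t} (\<lambda>s. 2 * sqrt (f s))"

text \<open>P is the law of (Y_t), where dY_t = 2 sqrt(f(t)) dt + n^(-1/2) dW_t, Y_0 = 0,
  W a standard Brownian motion: Y_0 = 0 almost surely and, for every grid
  0 = t_0 < t_1 < ... < t_k <= 1, the increments are independent Gaussians with
  mean drift f t_(i+1) - drift f t_i and variance (t_(i+1) - t_i)/n.\<close>
definition is_data_law :: "nat \<Rightarrow> (real \<Rightarrow> real) \<Rightarrow> (real \<Rightarrow> real) measure \<Rightarrow> bool" where
  "is_data_law n f P \<longleftrightarrow>
     prob_space P \<and> sets P = sets data_space \<and>
     (AE \<omega> in P. \<omega> 0 = 0) \<and>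
     (\<forall>k::nat. \<forall>t::nat \<Rightarrow> real.
        (t 0 = 0 \<and> (\<forall>i<k. t i < t (Suc i)) \<and> t k \<le> 1) \<longrightarrow>
          prob_space.indep_vars P (\<lambda>_. borel) (\<lambda>i \<omega>. \<omega> (t (Suc i)) - \<omega> (t i)) {..<k} \<and>
          (\<forall>i<k. distributed P lborel (\<lambda>\<omega>. \<omega> (t (Suc i)) - \<omega> (t i))
             (\<lambda>x. ennreal (normal_density (drift f (t (Suc i)) - drift f (t i))
                                          (sqrt ((t (Suc i) - t i) / real n)) x))))"

definition affine_class :: "(real \<Rightarrow> real) set" where
  "affine_class = {f. \<exists>a b. \<bar>a\<bar> + \<bar>b\<bar> \<le> 2 \<and> f = (\<lambda>x. a * x + b) \<and> (\<forall>x\<in>{0..1}. f x \<ge> 0)}"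

end

theory Submission
  imports Defs
begin

lemma nn_integral_normal1: "\<sigma> > 0 \<Longrightarrow> (\<integral>\<^sup>+ x. ennreal (normal_density m \<sigma> x) \<partial>lborel) = 1"
proof -
  assume s: "\<sigma> > 0"
  interpret prob_space "density lborel (normal_density m \<sigma>)" by (rule prob_space_normal_density[OF s])
  have "emeasure (density lborel (normal_density m \<sigma>)) UNIV = 1"
    using emeasure_space_1 by simp
  thus ?thesis by (simp add: emeasure_density)
qed

lemma sqrt_normal_prod:
  assumes s: "\<sigma> > 0"
  shows "sqrt (normal_density m0 \<sigma> x * normal_density m1 \<sigma> x) =
    exp (- ((m0 - m1)^2) / (8 * \<sigma>^2)) * normal_density ((m0+m1)/2) \<sigma> x"
proof -
  define c where "c = 1 / sqrt (2 * pi * \<sigma>\<^sup>2)"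
  have c: "c \<ge> 0" unfolding c_def by simp
  have "normal_density m0 \<sigma> x * normal_density m1 \<sigma> x =
      c^2 * exp (-(x - m0)\<^sup>2/ (2 * \<sigma>\<^sup>2) + -(x - m1)\<^sup>2/ (2 * \<sigma>\<^sup>2))"
    unfolding normal_density_def c_def by (simp add: mult_exp_exp power2_eq_square)
  also have "-(x - m0)\<^sup>2/ (2 * \<sigma>\<^sup>2) + -(x - m1)\<^sup>2/ (2 * \<sigma>\<^sup>2)
     = 2 * (- ((m0 - m1)^2) / (8 * \<sigma>^2) + -(x - (m0+m1)/2)\<^sup>2/ (2 * \<sigma>\<^sup>2))"
    using s by (simp add: field_simps power2_eq_square)
  finally have "normal_density m0 \<sigma> x * normal_density m1 \<sigma> x =
      (c * exp (- ((m0 - m1)^2) / (8 * \<sigma>^2) + -(x - (m0+m1)/2)\<^sup>2/ (2 * \<sigma>\<^sup>2)))^2"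
    by (simp add: power_mult_distrib exp_double[symmetric] mult.commute)
  hence "sqrt (normal_density m0 \<sigma> x * normal_density m1 \<sigma> x) =
      c * exp (- ((m0 - m1)^2) / (8 * \<sigma>^2) + -(x - (m0+m1)/2)\<^sup>2/ (2 * \<sigma>\<^sup>2))"
    using c by simp
  thus ?thesis unfolding normal_density_def c_def by (simp add: mult_exp_exp)
qed

lemma affinity_normal:
  assumes s: "\<sigma> > 0"
  shows "(\<integral>\<^sup>+ x. ennreal (sqrt (normal_density m0 \<sigma> x * normal_density m1 \<sigma> x)) \<partial>lborel)
     = ennreal (exp (- ((m0 - m1)^2) / (8 * \<sigma>^2)))"
proof -
  have "(\<integral>\<^sup>+ x. ennreal (sqrt (normal_density m0 \<sigma> x * normal_density m1 \<sigma> x)) \<partial>lborel)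
     = (\<integral>\<^sup>+ x. ennreal (exp (- ((m0 - m1)^2) / (8 * \<sigma>^2))) * ennreal (normal_density ((m0+m1)/2) \<sigma> x) \<partial>lborel)"
    by (simp add: sqrt_normal_prod[OF s] ennreal_mult)
  also have "\<dots> = ennreal (exp (- ((m0 - m1)^2) / (8 * \<sigma>^2)))"
    by (simp add: nn_integral_cmult nn_integral_normal1[OF s])
  finally show ?thesis .
qed

lemma PiM_density_prod:
  fixes g :: "'i \<Rightarrow> real \<Rightarrow> real"
  assumes I: "finite I" and gm: "\<And>i. i\<in>I \<Longrightarrow> g i \<in> borel_measurable borel"
    and gn: "\<And>i x. i \<in> I \<Longrightarrow> g i x \<ge> 0"
    and sf: "\<And>i. i\<in>I \<Longrightarrow> prob_space (density lborel (g i))"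
  shows "PiM I (\<lambda>i. density lborel (g i)) = density (PiM I (\<lambda>_. lborel)) (\<lambda>x. ennreal (\<Prod>i\<in>I. g i (x i)))"
proof -
  define M' where "M' = (\<lambda>i. if i\<in>I then density lborel (g i) else lborel)"
  interpret ps: product_sigma_finite M'
    unfolding product_sigma_finite_def M'_def
    using sf prob_space_imp_sigma_finite lborel.sigma_finite_measure_axioms by auto
  interpret pl: product_sigma_finite "\<lambda>_::'i. lborel"
    unfolding product_sigma_finite_def
    using lborel.sigma_finite_measure_axioms by auto
  have e1: "PiM I (\<lambda>i. density lborel (g i)) = PiM I M'"
    by (rule PiM_cong) (auto simp: M'_def)
  have "density (PiM I (\<lambda>_. lborel)) (\<lambda>x. ennreal (\<Prod>i\<in>I. g i (x i))) = PiM I M'"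
  proof (rule ps.PiM_eqI[OF I])
    show "sets (density (PiM I (\<lambda>_. lborel)) (\<lambda>x. ennreal (\<Prod>i\<in>I. g i (x i)))) = sets (PiM I M')"
      by (simp add: M'_def cong: sets_PiM_cong)
    fix A assume A: "\<And>i. i \<in> I \<Longrightarrow> A i \<in> sets (M' i)"
    have A': "\<And>i. i \<in> I \<Longrightarrow> A i \<in> sets borel" using A by (simp add: M'_def)
    have meas: "(\<lambda>x. ennreal (\<Prod>i\<in>I. g i (x i))) \<in> borel_measurable (PiM I (\<lambda>_. lborel))"
      using gm by measurable
    have "emeasure (density (PiM I (\<lambda>_. lborel)) (\<lambda>x. ennreal (\<Prod>i\<in>I. g i (x i)))) (Pi\<^sub>E I A)
       = (\<integral>\<^sup>+ x. ennreal (\<Prod>i\<in>I. g i (x i)) * indicator (Pi\<^sub>E I A) x \<partial>PiM I (\<lambda>_. lborel))"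
      using A' by (intro emeasure_density meas) (auto intro!: sets_PiM_I_finite I)
    also have "\<dots> = (\<integral>\<^sup>+ x. (\<Prod>i\<in>I. ennreal (g i (x i)) * indicator (A i) (x i)) \<partial>PiM I (\<lambda>_. lborel))"
    proof (rule nn_integral_cong)
      fix x assume "x \<in> space (PiM I (\<lambda>_. lborel :: real measure))"
      hence ext: "x \<in> extensional I" by (simp add: space_PiM PiE_def)
      have "indicator (Pi\<^sub>E I A) x = (\<Prod>i\<in>I. indicator (A i) (x i) :: ennreal)"
        using ext I by (auto simp: indicator_def PiE_def Pi_def prod_zero_iff)
      thus "ennreal (\<Prod>i\<in>I. g i (x i)) * indicator (Pi\<^sub>E I A) x = (\<Prod>i\<in>I. ennreal (g i (x i)) * indicator (A i) (x i))"
        using gn by (simp add: prod.distrib prod_ennreal)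
    qed
    also have "\<dots> = (\<Prod>i\<in>I. \<integral>\<^sup>+ y. ennreal (g i y) * indicator (A i) y \<partial>lborel)"
      using gm A' by (intro pl.product_nn_integral_prod[OF I]) auto
    also have "\<dots> = (\<Prod>i\<in>I. emeasure (M' i) (A i))"
      using gm A' by (intro prod.cong refl) (simp add: M'_def emeasure_density)
    finally show "emeasure (density (PiM I (\<lambda>_. lborel)) (\<lambda>x. ennreal (\<Prod>i\<in>I. g i (x i)))) (Pi\<^sub>E I A) = (\<Prod>i\<in>I. emeasure (M' i) (A i))" .
  qed
  with e1 show ?thesis by simp
qed

lemma amgm_s: fixes a b s :: real assumes "a \<ge> 0" "b \<ge> 0" "s > 0"
  shows "sqrt (a*b) \<le> s/2 * a + (1 / (2 * s)) * b"
proof -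
  define x where "x = sqrt (s*a)"
  define y where "y = sqrt (b/s)"
  have e: "s*a*(b/s) = a*b" using assms by (simp add: field_simps)
  have 1: "sqrt (a*b) = x * y" unfolding x_def y_def by (metis e real_sqrt_mult)
  have 2: "2 * (x * y) \<le> x^2 + y^2"
    using sum_squares_bound[of x y] by (simp add: power2_eq_square algebra_simps)
  have 3: "x^2 = s*a" "y^2 = b/s" unfolding x_def y_def using assms by simp_all
  have 4: "s/2 * a + (1 / (2 * s)) * b = (s*a + b/s)/2" using assms by (simp add: field_simps)
  have 5: "2*(x*y) \<le> s*a + b/s" using 2 3 by simp
  show ?thesis unfolding 1 4 using 5 by (simp add: le_divide_eq mult.commute)
qed

lemma test_bound:
  fixes p0 p1 :: "'a \<Rightarrow> real"
  assumes m0: "p0 \<in> borel_measurable N" and m1: "p1 \<in> borel_measurable N"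
    and n0: "\<And>x. p0 x \<ge> 0" and n1: "\<And>x. p1 x \<ge> 0"
    and P0: "prob_space (density N p0)" and P1: "prob_space (density N p1)"
    and S: "S \<in> sets N"
    and rho: "(\<integral>\<^sup>+ x. ennreal (sqrt (p0 x * p1 x)) \<partial>N) \<ge> ennreal (exp (-1))"
  shows "measure (density N p0) S + measure (density N p1) (space N - S) \<ge> 3/(8*exp 2)"
proof -
  define s :: real where "s = 4 * exp 1"
  have s: "s > 0" unfolding s_def by simp
  let ?Q0 = "density N p0" and ?Q1 = "density N p1"
  interpret Q0: prob_space ?Q0 by (rule P0)
  interpret Q1: prob_space ?Q1 by (rule P1)
  have S': "space N - S \<in> sets N" using S by auto
  have em: "\<And>p A. p \<in> borel_measurable N \<Longrightarrow> A \<in> sets N \<Longrightarrow>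
      (\<integral>\<^sup>+ x. ennreal (p x) * indicator A x \<partial>N) = emeasure (density N p) A"
    by (simp add: emeasure_density)
  let ?F = "\<lambda>x. ennreal (s/2) * (ennreal (p0 x) * indicator S x) + ennreal (s/2) * (ennreal (p1 x) * indicator (space N - S) x)
     + (ennreal ((1 / (2 * s))) * (ennreal (p1 x) * indicator S x) + ennreal ((1 / (2 * s))) * (ennreal (p0 x) * indicator (space N - S) x))"
  have "(\<integral>\<^sup>+ x. ennreal (sqrt (p0 x * p1 x)) \<partial>N) \<le> (\<integral>\<^sup>+ x. ?F x \<partial>N)"
  proof (rule nn_integral_mono)
    fix x assume x: "x \<in> space N"
    show "ennreal (sqrt (p0 x * p1 x)) \<le> ?F x"
    proof (cases "x \<in> S")
      case True
      have "sqrt (p0 x * p1 x) \<le> s/2 * p0 x + (1 / (2 * s)) * p1 x" using amgm_s n0 n1 s by blast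
      thus ?thesis using True s n0 n1
        by (simp add: ennreal_mult[symmetric] ennreal_plus[symmetric] del: ennreal_plus)
    next
      case False
      have "sqrt (p0 x * p1 x) = sqrt (p1 x * p0 x)" by (simp add: mult.commute)
      also have "\<dots> \<le> s/2 * p1 x + (1 / (2 * s)) * p0 x" using amgm_s n0 n1 s by blast
      finally show ?thesis using False x s n0 n1
        by (simp add: ennreal_mult[symmetric] ennreal_plus[symmetric] del: ennreal_plus)
    qed
  qed
  also have "(\<integral>\<^sup>+ x. ?F x \<partial>N) = ennreal (s/2) * emeasure ?Q0 S + ennreal (s/2) * emeasure ?Q1 (space N - S)
      + (ennreal ((1 / (2 * s))) * emeasure ?Q1 S + ennreal ((1 / (2 * s))) * emeasure ?Q0 (space N - S))"
    using m0 m1 S S' by (simp add: nn_integral_add nn_integral_cmult em)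
  also have "\<dots> = ennreal (s/2 * (measure ?Q0 S + measure ?Q1 (space N - S)) + (1 / (2 * s)) * (measure ?Q1 S + measure ?Q0 (space N - S)))"
    using s by (simp add: Q0.emeasure_eq_measure Q1.emeasure_eq_measure ennreal_mult[symmetric] ennreal_plus[symmetric] distrib_left add_divide_distrib del: ennreal_plus)
  finally have "ennreal (exp (-1)) \<le> ennreal (s/2 * (measure ?Q0 S + measure ?Q1 (space N - S)) + (1 / (2 * s)) * (measure ?Q1 S + measure ?Q0 (space N - S)))"
    using rho by (rule order_trans[rotated])
  hence ineq: "exp (-1) \<le> s/2 * (measure ?Q0 S + measure ?Q1 (space N - S)) + (1 / (2 * s)) * (measure ?Q1 S + measure ?Q0 (space N - S))"
    using s by (subst (asm) ennreal_le_iff) (auto intro!: add_nonneg_nonneg mult_nonneg_nonneg)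
  have "measure ?Q1 S + measure ?Q0 (space N - S) \<le> 2"
    using Q0.prob_le_1 Q1.prob_le_1 by (smt (verit))
  hence "(1 / (2 * s)) * (measure ?Q1 S + measure ?Q0 (space N - S)) \<le> (1 / (2 * s)) * 2"
    using s by (intro mult_left_mono) auto
  hence "(1 / (2 * s)) * (measure ?Q1 S + measure ?Q0 (space N - S)) \<le> 1/s" using s by simp
  with ineq have "exp (-1) - 1/s \<le> s/2 * (measure ?Q0 S + measure ?Q1 (space N - S))" by linarith
  moreover have "exp (-1) - 1/s = 3/(4 * exp 1)" unfolding s_def by (simp add: exp_minus field_simps)
  ultimately have "3/(4 * exp 1) \<le> 2 * exp 1 * (measure ?Q0 S + measure ?Q1 (space N - S))"
    unfolding s_def by simp
  hence "3/(4 * exp 1) / (2 * exp 1) \<le> (measure ?Q0 S + measure ?Q1 (space N - S))"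
    by (simp add: divide_le_eq mult.commute)
  moreover have "(3::real)/(4 * exp 1) / (2 * exp 1) = 3 / (8 * exp 2)"
  proof -
    have "exp (2::real) = exp 1 * exp 1" by (simp add: mult_exp_exp)
    thus ?thesis by (simp add: field_simps)
  qed
  ultimately show ?thesis by simp
qed

lemma grid_props:
  fixes J :: "real set"
  assumes J: "finite J" "J \<subseteq> {0..1}"
  defines "xs \<equiv> sorted_list_of_set (insert 0 (insert 1 J))"
  shows "length xs \<ge> 2" "xs ! 0 = 0" "\<And>i. Suc i < length xs \<Longrightarrow> xs ! i < xs ! Suc i"
    "\<And>i. i < length xs \<Longrightarrow> 0 \<le> xs ! i \<and> xs ! i \<le> 1"
    "\<And>s. s \<in> J \<Longrightarrow> \<exists>m<length xs. xs ! m = s"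
proof -
  let ?T = "insert 0 (insert 1 J) :: real set"
  have fT: "finite ?T" using J by simp
  have setxs: "set xs = ?T" unfolding xs_def using fT by (rule set_sorted_list_of_set)
  have len: "length xs = card ?T" unfolding xs_def by (rule length_sorted_list_of_set)
  have "card {0::real, 1} \<le> card ?T" using fT by (intro card_mono) auto
  thus "length xs \<ge> 2" unfolding len by simp
  have "Min ?T = 0" using J by (intro Min_eqI fT) auto
  thus "xs ! 0 = 0" unfolding xs_def using sorted_list_of_set_nonempty[OF fT] by simp
  have sw: "sorted_wrt (<) xs" unfolding xs_def by (rule strict_sorted_list_of_set)
  show "\<And>i. Suc i < length xs \<Longrightarrow> xs ! i < xs ! Suc i"
    using sw by (intro sorted_wrt_nth_less) auto
  show "\<And>i. i < length xs \<Longrightarrow> 0 \<le> xs ! i \<and> xs ! i \<le> 1"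
  proof -
    fix i assume "i < length xs"
    hence "xs ! i \<in> ?T" using setxs nth_mem by blast
    thus "0 \<le> xs ! i \<and> xs ! i \<le> 1" using J by auto
  qed
  show "\<And>s. s \<in> J \<Longrightarrow> \<exists>m<length xs. xs ! m = s"
    using setxs by (metis in_set_conv_nth insertCI)
qed

lemma cyl_law:
  fixes P :: "(real \<Rightarrow> real) measure" and t :: "nat \<Rightarrow> real" and pos :: "real \<Rightarrow> nat"
  assumes law: "is_data_law n f P"
    and J: "finite J" "J \<subseteq> {0..1}" and X: "X \<in> sets (PiM J (\<lambda>_. borel :: real measure))"
    and k: "k \<ge> 1" and t0: "t 0 = 0" and tinc: "\<And>i. i < k \<Longrightarrow> t i < t (Suc i)" and tk: "t k \<le> 1"
    and tr: "\<And>i. i \<le> k \<Longrightarrow> 0 \<le> t i \<and> t i \<le> 1"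
    and pos: "\<And>s. s \<in> J \<Longrightarrow> pos s \<le> k \<and> t (pos s) = s"
  defines "\<Phi> \<equiv> \<lambda>d::nat\<Rightarrow>real. \<lambda>s\<in>J. \<Sum>i<pos s. d i"
  shows "emeasure P (prod_emb {0..1} (\<lambda>_. borel) J X) =
    emeasure (PiM {..<k} (\<lambda>i. density lborel (\<lambda>x. ennreal (normal_density (drift f (t (Suc i)) - drift f (t i)) (sqrt ((t (Suc i) - t i) / real n)) x))))
      (\<Phi> -` X \<inter> space (PiM {..<k} (\<lambda>_. borel)))"
proof -
  let ?g = "\<lambda>i x. ennreal (normal_density (drift f (t (Suc i)) - drift f (t i)) (sqrt ((t (Suc i) - t i) / real n)) x)"
  let ?Xi = "\<lambda>i (\<omega>::real\<Rightarrow>real). \<omega> (t (Suc i)) - \<omega> (t i)"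
  let ?D = "\<lambda>\<omega>. \<lambda>i\<in>{..<k}. ?Xi i \<omega>"
  let ?S = "\<Phi> -` X \<inter> space (PiM {..<k} (\<lambda>_. borel :: real measure))"
  have ps: "prob_space P" and sP: "sets P = sets data_space" and ae0: "AE \<omega> in P. \<omega> 0 = 0"
    and grid: "prob_space.indep_vars P (\<lambda>_. borel) ?Xi {..<k} \<and>
          (\<forall>i<k. distributed P lborel (?Xi i) (?g i))"
    using law t0 tinc tk unfolding is_data_law_def by blast+
  interpret prob_space P by (rule ps)
  have spP: "space P = space data_space" using sP by (rule sets_eq_imp_space_eq)
  have comp: "(\<lambda>\<omega>. \<omega> s) \<in> borel_measurable P" if "s \<in> {0..1}" for s
    using that measurable_component_singleton[of s "{0..1}" "\<lambda>_. borel :: real measure"]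
    unfolding data_space_def[symmetric] by (subst measurable_cong_sets[OF sP refl]) auto
  have rv: "random_variable borel (?Xi i)" if "i \<in> {..<k}" for i
    using that tr by (intro borel_measurable_diff comp) auto
  have Dm: "?D \<in> measurable P (PiM {..<k} (\<lambda>_. borel))"
    using rv by (intro measurable_restrict) auto
  have Phim: "\<Phi> \<in> measurable (PiM {..<k} (\<lambda>_. borel :: real measure)) (PiM J (\<lambda>_. borel))"
    unfolding \<Phi>_def
  proof (intro measurable_restrict borel_measurable_sum)
    fix s i assume s: "s \<in> J" and i: "i \<in> {..<pos s}"
    hence "i \<in> {..<k}" using pos[OF s] by auto
    thus "(\<lambda>x. x i) \<in> borel_measurable (PiM {..<k} (\<lambda>_. borel :: real measure))"
      by (rule measurable_component_singleton)
  qed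
  have Ss: "?S \<in> sets (PiM {..<k} (\<lambda>_. borel))" using measurable_sets[OF Phim X] .
  have indep: "indep_vars (\<lambda>_. borel) ?Xi {..<k}" using grid by blast
  have D: "distr P (PiM {..<k} (\<lambda>_. borel)) ?D = PiM {..<k} (\<lambda>i. distr P borel (?Xi i))"
  proof -
    have ne: "{..<k} \<noteq> {}" using k by (metis lessThan_iff less_le_trans zero_less_one empty_iff)
    show ?thesis using indep_vars_iff_distr_eq_PiM'[where I="{..<k}" and M'="\<lambda>_. borel" and X="?Xi", OF ne rv] indep by blast
  qed
  also have "\<dots> = PiM {..<k} (\<lambda>i. density lborel (?g i))"
  proof (rule PiM_cong[OF refl])
    fix i assume i: "i \<in> {..<k}"
    have "distributed P lborel (?Xi i) (?g i)" using grid i by blast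
    hence "distr P lborel (?Xi i) = density lborel (?g i)" unfolding distributed_def by blast
    moreover have "distr P borel (?Xi i) = distr P lborel (?Xi i)"
      by (rule distr_cong) simp_all
    ultimately show "distr P borel (?Xi i) = density lborel (?g i)" by simp
  qed
  finally have Deq: "distr P (PiM {..<k} (\<lambda>_. borel)) ?D = PiM {..<k} (\<lambda>i. density lborel (?g i))" .
  have E1: "prod_emb {0..1} (\<lambda>_. borel) J X \<in> sets P"
    unfolding sP data_space_def using J X by simp
  have E2: "?D -` ?S \<inter> space P \<in> sets P" using measurable_sets[OF Dm Ss] .
  have "emeasure P (prod_emb {0..1} (\<lambda>_. borel) J X) = emeasure P (?D -` ?S \<inter> space P)"
  proof (rule emeasure_eq_AE[OF _ E1 E2])
    show "AE \<omega> in P. \<omega> \<in> prod_emb {0..1} (\<lambda>_. borel) J X \<longleftrightarrow> \<omega> \<in> ?D -` ?S \<inter> space P"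
      using ae0
    proof (rule AE_mp, intro AE_I2 impI)
      fix \<omega> :: "real \<Rightarrow> real" assume w: "\<omega> \<in> space P" and w0: "\<omega> 0 = 0"
      have eq: "\<Phi> (?D \<omega>) = restrict \<omega> J"
      proof
        fix s show "\<Phi> (?D \<omega>) s = restrict \<omega> J s"
        proof (cases "s \<in> J")
          case True
          have "(\<Sum>i<pos s. ?D \<omega> i) = (\<Sum>i<pos s. \<omega> (t (Suc i)) - \<omega> (t i))"
            using pos[OF True] by (intro sum.cong) auto
          also have "\<dots> = \<omega> (t (pos s)) - \<omega> (t 0)" by (rule sum_lessThan_telescope)
          also have "\<dots> = \<omega> s" using pos[OF True] t0 w0 by simp
          finally show ?thesis using True unfolding \<Phi>_def by simp
        qed (simp add: \<Phi>_def)
      qed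
      have "?D \<omega> \<in> space (PiM {..<k} (\<lambda>_. borel :: real measure))" by (simp add: space_PiM)
      moreover have "\<omega> \<in> space (PiM {0..1} (\<lambda>_. borel :: real measure))"
        using w unfolding spP data_space_def .
      ultimately show "\<omega> \<in> prod_emb {0..1} (\<lambda>_. borel) J X \<longleftrightarrow> \<omega> \<in> ?D -` ?S \<inter> space P"
        using w eq by (auto simp: prod_emb_def space_PiM)
    qed
  qed
  also have "\<dots> = emeasure (distr P (PiM {..<k} (\<lambda>_. borel)) ?D) ?S"
    by (rule emeasure_distr[OF Dm Ss, symmetric])
  also have "\<dots> = emeasure (PiM {..<k} (\<lambda>i. density lborel (?g i))) ?S" unfolding Deq ..
  finally show ?thesis .
qed

lemma deriv_F:
  assumes "x + c > 0"
  shows "((\<lambda>x. 4/3 * ((x + c) * sqrt (x + c))) has_real_derivative 2 * sqrt (x + c)) (at x)"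
proof -
  have lin: "((\<lambda>x. x + c) has_real_derivative 1) (at x)"
    using DERIV_add[OF DERIV_ident DERIV_const[of c]] by simp
  have sq: "((\<lambda>x. sqrt (x + c)) has_real_derivative inverse (sqrt (x + c)) / 2 * 1) (at x)"
    using DERIV_chain2[OF DERIV_real_sqrt[OF assms] lin] .
  have pr: "((\<lambda>x. (x + c) * sqrt (x + c)) has_real_derivative
      1 * sqrt (x + c) + (inverse (sqrt (x + c)) / 2 * 1) * (x + c)) (at x)"
    using DERIV_mult[OF lin sq] .
  have "(x + c) * inverse (sqrt (x + c)) = sqrt (x + c)"
    using assms by (metis less_eq_real_def real_div_sqrt divide_inverse)
  hence eq: "4/3 * (1 * sqrt (x + c) + (inverse (sqrt (x + c)) / 2 * 1) * (x + c)) = 2 * sqrt (x + c)"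
    by (simp add: algebra_simps)
  show ?thesis using DERIV_cmult[OF pr, of "4/3"] unfolding eq .
qed

lemma drift_shift:
  assumes c: "c \<ge> 0" and t: "t \<ge> 0"
  shows "drift (\<lambda>x. x + c) t = 4/3 * ((t + c) * sqrt (t + c)) - 4/3 * (c * sqrt c)"
proof -
  let ?F = "\<lambda>x. 4/3 * ((x + c) * sqrt (x + c))"
  have "((\<lambda>s. 2 * sqrt (s + c)) has_integral (?F t - ?F 0)) {0..t}"
  proof (rule fundamental_theorem_of_calculus_interior[OF t])
    show "continuous_on {0..t} ?F" by (intro continuous_intros)
    fix x assume "x \<in> {0<..<t}"
    hence "x + c > 0" using c by auto
    thus "(?F has_vector_derivative 2 * sqrt (x + c)) (at x)"
      using deriv_F has_real_derivative_iff_has_vector_derivative by blast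
  qed
  from integral_unique[OF this] show ?thesis unfolding drift_def by simp
qed

lemma ln_ratio_bound:
  fixes y :: real assumes y: "y \<ge> 1"
  shows "2 * (y - 1) / (y + 1) \<le> ln y"
proof -
  let ?g = "\<lambda>y. ln y - 2 * (y - 1) / (y + 1)"
  have "?g 1 \<le> ?g y"
  proof (rule DERIV_nonneg_imp_nondecreasing[OF y])
    fix x :: real assume x: "1 \<le> x" "x \<le> y"
    have "(?g has_real_derivative (1/x - 2 * (1 * (x + 1) - (x - 1) * 1) / (x + 1)^2)) (at x)"
      using x by (intro derivative_eq_intros) (auto simp: power2_eq_square)
    moreover have "1/x - 2 * (1 * (x + 1) - (x - 1) * 1) / (x + 1)^2 = 1/x - 4 / (x + 1)^2"
      by simp
    moreover have "4 / (x + 1)^2 \<le> 1/x"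
    proof -
      have "(x+1)^2 - 4*x = (x-1)^2" by (simp add: power2_eq_square algebra_simps)
      hence "4 * x \<le> (x+1)^2" by (smt (verit) zero_le_power2)
      hence "4 / (x+1)^2 \<le> 4 / (4 * x)" using x by (intro divide_left_mono) auto
      thus ?thesis by simp
    qed
    hence "1/x - 4 / (x + 1)^2 \<ge> 0" by simp
    ultimately show "\<exists>d. (?g has_real_derivative d) (at x) \<and> 0 \<le> d" by auto
  qed
  thus ?thesis by simp
qed

lemma incr_bound:
  fixes \<delta> a b :: real
  assumes d: "\<delta> > 0" and ab: "0 \<le> a" "a \<le> b"
  defines "U \<equiv> \<lambda>x. 4/3 * ((x + \<delta>) * sqrt (x + \<delta>)) - 4/3 * ((x + 0) * sqrt (x + 0))"
  shows "0 \<le> U b - U a" "U b - U a \<le> 4 * \<delta> * (sqrt (b + \<delta>) - sqrt (a + \<delta>))"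
proof -
  have dU: "(U has_real_derivative 2 * sqrt (x + \<delta>) - 2 * sqrt (x + 0)) (at x)" if "x > 0" for x
    unfolding U_def using that d by (intro DERIV_diff deriv_F) auto
  have cU: "continuous_on {a..b} U" unfolding U_def by (intro continuous_intros)
  show "0 \<le> U b - U a"
  proof -
    have "U a \<le> U b"
    proof (rule DERIV_nonneg_imp_increasing_open[OF ab(2) _ cU])
      fix x assume "a < x" "x < b"
      hence x: "x > 0" using ab by auto
      have "2 * sqrt (x + 0) \<le> 2 * sqrt (x + \<delta>)" using d by simp
      thus "\<exists>y. (U has_real_derivative y) (at x) \<and> 0 \<le> y" using dU[OF x] by auto
    qed
    thus ?thesis by simp
  qed
  define V where "V = (\<lambda>x. 4 * \<delta> * sqrt (x + \<delta>) - U x)"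
  have "V a \<le> V b"
  proof (rule DERIV_nonneg_imp_increasing_open[OF ab(2)])
    show "continuous_on {a..b} V" unfolding V_def U_def by (intro continuous_intros)
    fix x assume "a < x" "x < b"
    hence x: "x > 0" using ab by auto
    have xd: "x + \<delta> > 0" using x d by simp
    have lin: "((\<lambda>x. x + \<delta>) has_real_derivative 1) (at x)"
      using DERIV_add[OF DERIV_ident DERIV_const[of \<delta>]] by simp
    have sq: "((\<lambda>x. sqrt (x + \<delta>)) has_real_derivative inverse (sqrt (x + \<delta>)) / 2 * 1) (at x)"
      using DERIV_chain2[OF DERIV_real_sqrt[OF xd] lin] .
    have dV: "(V has_real_derivative 4 * \<delta> * (inverse (sqrt (x + \<delta>)) / 2 * 1) - (2 * sqrt (x + \<delta>) - 2 * sqrt (x + 0))) (at x)"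
      unfolding V_def using DERIV_diff[OF DERIV_cmult[OF sq, of "4 * \<delta>"] dU[OF x]] .
    have pos: "0 \<le> 4 * \<delta> * (inverse (sqrt (x + \<delta>)) / 2 * 1) - (2 * sqrt (x + \<delta>) - 2 * sqrt (x + 0))"
    proof -
      let ?r = "sqrt (x + \<delta>)" and ?q = "sqrt x"
      have r: "?r > 0" using xd by simp
      have rq: "?q \<le> ?r" using d x by simp
      have q0: "?q \<ge> 0" using x by simp
      have "?r * ?r = x + \<delta>" using xd by (simp del: real_sqrt_mult_self add: real_sqrt_mult[symmetric])
      moreover have "?q * ?q = x" using x by simp
      moreover have "?q * ?q \<le> ?q * ?r" using rq q0 by (intro mult_left_mono)
      ultimately have key: "?r * ?r - ?q * ?r \<le> \<delta>" by linarith
      have "(2 * ?r - 2 * ?q) * ?r \<le> 2 * \<delta>" using key by (simp add: algebra_simps)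
      hence "2 * ?r - 2 * ?q \<le> 2 * \<delta> / ?r" using r by (simp add: le_divide_eq)
      moreover have "4 * \<delta> * (inverse ?r / 2 * 1) = 2 * \<delta> / ?r" by (simp add: field_simps)
      ultimately show ?thesis by simp
    qed
    show "\<exists>y. (V has_real_derivative y) (at x) \<and> 0 \<le> y" using dV pos by blast
  qed
  thus "U b - U a \<le> 4 * \<delta> * (sqrt (b + \<delta>) - sqrt (a + \<delta>))"
    unfolding V_def by (simp add: algebra_simps)
qed

lemma ratio_bound:
  fixes \<delta> a b d :: real
  assumes dl: "\<delta> > 0" and ab: "0 \<le> a" "a < b"
    and d0: "0 \<le> d" and d1: "d \<le> 4 * \<delta> * (sqrt (b + \<delta>) - sqrt (a + \<delta>))"
  shows "d^2 / (b - a) \<le> 4 * \<delta>^2 * (ln (b + \<delta>) - ln (a + \<delta>))"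
proof -
  define A where "A = a + \<delta>"
  define B where "B = b + \<delta>"
  have A: "A > 0" and AB: "A < B" using dl ab unfolding A_def B_def by auto
  have BA: "b - a = B - A" unfolding A_def B_def by simp
  have sA: "sqrt A > 0" and sAB: "sqrt A < sqrt B" using A AB by auto
  have diffsq: "B - A = (sqrt B - sqrt A) * (sqrt B + sqrt A)"
    using A AB by (simp add: algebra_simps)
  have "d^2 \<le> (4 * \<delta> * (sqrt B - sqrt A))^2"
    using d0 d1 unfolding A_def B_def by (intro power_mono) auto
  hence "d^2 / (b - a) \<le> (4 * \<delta> * (sqrt B - sqrt A))^2 / (B - A)"
    using AB unfolding BA by (intro divide_right_mono) auto
  also have "\<dots> = 16 * \<delta>^2 * ((sqrt B - sqrt A) / (sqrt B + sqrt A))"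
  proof -
    have gen: "\<And>p q. p > 0 \<Longrightarrow> q > 0 \<Longrightarrow> (4*\<delta>*p)^2/(p*q) = 16*\<delta>^2*(p/q)"
      by (simp add: power2_eq_square field_simps)
    show ?thesis unfolding diffsq using sA sAB by (intro gen) linarith+
  qed
  also have "(sqrt B - sqrt A) / (sqrt B + sqrt A) \<le> (ln B - ln A) / 4"
  proof -
    define y where "y = sqrt B / sqrt A"
    have y1: "y \<ge> 1" unfolding y_def using sA sAB by simp
    have "(sqrt B - sqrt A) / (sqrt B + sqrt A) = (y - 1) / (y + 1)"
    proof -
      have gen2: "\<And>p q::real. p > 0 \<Longrightarrow> (q/p - 1)/(q/p + 1) = (q-p)/(q+p)"
      proof -
        fix p q :: real assume p: "p > 0"
        have "q/p - 1 = (q-p)/p" "q/p + 1 = (q+p)/p" using p by (simp_all add: field_simps)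
        thus "(q/p - 1)/(q/p + 1) = (q-p)/(q+p)" using p by simp
      qed
      show ?thesis unfolding y_def using gen2[OF sA, of "sqrt B"] by simp
    qed
    also have "\<dots> \<le> ln y / 2"
    proof -
      have h: "2 * (y - 1) / (y + 1) = 2 * ((y-1)/(y+1))" by (simp only: times_divide_eq_right)
      show ?thesis using ln_ratio_bound[OF y1] unfolding h by linarith
    qed
    also have "ln y = (ln B - ln A) / 2"
      unfolding y_def using A AB by (simp add: ln_div ln_sqrt)
    finally show ?thesis by simp
  qed
  hence "16 * \<delta>^2 * ((sqrt B - sqrt A) / (sqrt B + sqrt A)) \<le> 16 * \<delta>^2 * ((ln B - ln A) / 4)"
    by (intro mult_left_mono) auto
  finally show ?thesis unfolding A_def B_def by simp
qed

lemma symdiff_union_bound: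
  fixes A Zf :: "nat \<Rightarrow> 'a set"
  assumes fm: "finite_measure M" and A: "range A \<subseteq> sets M" and Z: "\<And>i. Zf i \<in> sets M"
    and dj: "disjoint_family A"
  shows "measure M (((\<Union>i. A i) - (\<Union>i<N. Zf i)) \<union> ((\<Union>i<N. Zf i) - (\<Union>i. A i)))
     \<le> measure M ((\<Union>i. A i) - (\<Union>i<N. A i)) + (\<Sum>i<N. measure M ((A i - Zf i) \<union> (Zf i - A i)))"
proof -
  interpret finite_measure M by (rule fm)
  have sub: "((\<Union>i. A i) - (\<Union>i<N. Zf i)) \<union> ((\<Union>i<N. Zf i) - (\<Union>i. A i))
      \<subseteq> ((\<Union>i. A i) - (\<Union>i<N. A i)) \<union> (\<Union>i<N. (A i - Zf i) \<union> (Zf i - A i))"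
  proof
    fix x assume x: "x \<in> ((\<Union>i. A i) - (\<Union>i<N. Zf i)) \<union> ((\<Union>i<N. Zf i) - (\<Union>i. A i))"
    show "x \<in> ((\<Union>i. A i) - (\<Union>i<N. A i)) \<union> (\<Union>i<N. (A i - Zf i) \<union> (Zf i - A i))"
    proof (cases "x \<in> (\<Union>i. A i)")
      case True
      then obtain j where j: "x \<in> A j" by auto
      show ?thesis
      proof (cases "j < N")
        case True
        with x j show ?thesis by auto
      next
        case False
        have "x \<notin> A i" if "i < N" for i
          using dj j False that unfolding disjoint_family_on_def by (metis disjoint_iff not_less_iff_gr_or_eq UNIV_I)
        with j show ?thesis by auto
      qed
    next
      case False with x show ?thesis by auto
    qed
  qed
  have u1: "(\<Union>i. A i) \<in> sets M" using A by auto
  have u2: "(\<Union>i<N. A i) \<in> sets M" using A by (intro sets.finite_UN) auto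
  have m1: "(\<Union>i. A i) - (\<Union>i<N. A i) \<in> sets M" using u1 u2 by auto
  have m2: "(\<Union>i<N. (A i - Zf i) \<union> (Zf i - A i)) \<in> sets M" using A Z by auto
  have "measure M (((\<Union>i. A i) - (\<Union>i<N. Zf i)) \<union> ((\<Union>i<N. Zf i) - (\<Union>i. A i)))
      \<le> measure M (((\<Union>i. A i) - (\<Union>i<N. A i)) \<union> (\<Union>i<N. (A i - Zf i) \<union> (Zf i - A i)))"
    using sub m1 m2 by (intro finite_measure_mono) auto
  also have "\<dots> \<le> measure M ((\<Union>i. A i) - (\<Union>i<N. A i)) + measure M (\<Union>i<N. (A i - Zf i) \<union> (Zf i - A i))"
    using m1 m2 by (intro measure_Un_le) auto
  also have "measure M (\<Union>i<N. (A i - Zf i) \<union> (Zf i - A i)) \<le> (\<Sum>i<N. measure M ((A i - Zf i) \<union> (Zf i - A i)))"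
    using A Z by (intro finite_measure_subadditive_finite) auto
  finally show ?thesis by simp
qed

lemma tail_small:
  fixes A :: "nat \<Rightarrow> 'a set"
  assumes fm: "finite_measure M" and A: "range A \<subseteq> sets M" and e: "e > 0"
  shows "eventually (\<lambda>N. measure M ((\<Union>i. A i) - (\<Union>i<N. A i)) < e) sequentially"
proof -
  interpret finite_measure M by (rule fm)
  define B where "B N = (\<Union>i<N. A i)" for N
  have Bs: "range B \<subseteq> sets M" using A unfolding B_def by auto
  have inc: "incseq B" unfolding B_def incseq_def by (force simp: subset_eq)
  have UB: "(\<Union>N. B N) = (\<Union>i. A i)" unfolding B_def by (auto intro: lessI)
  have lim: "(\<lambda>N. measure M (B N)) \<longlonglongrightarrow> measure M (\<Union>i. A i)"
    using finite_Lim_measure_incseq[OF Bs inc] UB by simp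
  then have "eventually (\<lambda>N. dist (measure M (B N)) (measure M (\<Union>i. A i)) < e) sequentially"
    using e by (rule tendstoD)
  then show ?thesis
  proof (rule eventually_mono)
    fix N assume "dist (measure M (B N)) (measure M (\<Union>i. A i)) < e"
    moreover have "measure M ((\<Union>i. A i) - B N) = measure M (\<Union>i. A i) - measure M (B N)"
      using A Bs UB by (intro finite_measure_Diff) (auto simp: B_def)
    ultimately show "measure M ((\<Union>i. A i) - (\<Union>i<N. A i)) < e"
      unfolding B_def dist_real_def by simp
  qed
qed

lemma approx2:
  assumes alg: "algebra \<Omega> G" and s1: "sets M1 = sigma_sets \<Omega> G" and s2: "sets M2 = sigma_sets \<Omega> G"
    and f1: "finite_measure M1" and f2: "finite_measure M2" and A: "A \<in> sigma_sets \<Omega> G"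
  shows "\<forall>e>0. \<exists>Z\<in>G. measure M1 ((A - Z) \<union> (Z - A)) < e \<and> measure M2 ((A - Z) \<union> (Z - A)) < e"
proof -
  interpret algebra \<Omega> G by (rule alg)
  have GS: "\<And>Z. Z \<in> G \<Longrightarrow> Z \<in> sigma_sets \<Omega> G" by auto
  have ss: "sigma_algebra \<Omega> (sigma_sets \<Omega> G)" using space_closed by (rule sigma_algebra_sigma_sets)
  interpret S: sigma_algebra \<Omega> "sigma_sets \<Omega> G" by (rule ss)
  show ?thesis
    using Int_stable space_closed A
  proof (induction rule: sigma_sets_induct_disjoint)
    case (basic A)
    then show ?case by force
  next
    case empty
    then show ?case by force
  next
    case (compl A)
    show ?case
    proof (intro allI impI)
      fix e :: real assume e: "e > 0"
      from compl.IH e obtain Z where Z: "Z \<in> G" "measure M1 ((A - Z) \<union> (Z - A)) < e" "measure M2 ((A - Z) \<union> (Z - A)) < e"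
        by blast
      have eq: "((\<Omega> - A) - (\<Omega> - Z)) \<union> ((\<Omega> - Z) - (\<Omega> - A)) = (A - Z) \<union> (Z - A)"
        using Z(1) space_closed S.sets_into_space[OF compl.hyps] by auto
      show "\<exists>Z\<in>G. measure M1 ((\<Omega> - A - Z) \<union> (Z - (\<Omega> - A))) < e \<and> measure M2 ((\<Omega> - A - Z) \<union> (Z - (\<Omega> - A))) < e"
        using Z eq by (intro bexI[of _ "\<Omega> - Z"]) auto
    qed
  next
    case (union A)
    show ?case
    proof (intro allI impI)
      fix e :: real assume e: "e > 0"
      have As1: "range A \<subseteq> sets M1" and As2: "range A \<subseteq> sets M2" using union.hyps s1 s2 by auto
      have "eventually (\<lambda>N. measure M1 ((\<Union>i. A i) - (\<Union>i<N. A i)) < e/2 \<and> measure M2 ((\<Union>i. A i) - (\<Union>i<N. A i)) < e/2) sequentially"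
        using tail_small[OF f1 As1, of "e/2"] tail_small[OF f2 As2, of "e/2"] e by (intro eventually_conj) auto
      then obtain N where N1: "measure M1 ((\<Union>i. A i) - (\<Union>i<N. A i)) < e/2"
        and N2: "measure M2 ((\<Union>i. A i) - (\<Union>i<N. A i)) < e/2"
        by (auto simp: eventually_sequentially)
      define e' where "e' = e / (2 * (real N + 1))"
      have e': "e' > 0" using e unfolding e'_def by simp
      have "\<forall>i. \<exists>Z. Z \<in> G \<and> measure M1 ((A i - Z) \<union> (Z - A i)) < e' \<and> measure M2 ((A i - Z) \<union> (Z - A i)) < e'"
        using union.IH e' by blast
      then obtain Zf where Zf: "\<And>i. Zf i \<in> G" "\<And>i. measure M1 ((A i - Zf i) \<union> (Zf i - A i)) < e'"
          "\<And>i. measure M2 ((A i - Zf i) \<union> (Zf i - A i)) < e'"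
        by metis
      have ZG: "(\<Union>i<N. Zf i) \<in> G" using Zf(1) by auto
      have Zs1: "\<And>i. Zf i \<in> sets M1" and Zs2: "\<And>i. Zf i \<in> sets M2" using Zf(1) s1 s2 by auto
      have sumb: "(\<Sum>i<N. measure M ((A i - Zf i) \<union> (Zf i - A i))) \<le> real N * e'"
        if "\<And>i. measure M ((A i - Zf i) \<union> (Zf i - A i)) < e'" for M :: "'a measure"
        using sum_mono[of "{..<N}" "\<lambda>i. measure M ((A i - Zf i) \<union> (Zf i - A i))" "\<lambda>_. e'"] that
        by (simp add: less_imp_le)
      have Ne: "real N * e' \<le> e/2" unfolding e'_def using e
        by (simp add: field_simps)
      have "measure M1 (((\<Union>i. A i) - (\<Union>i<N. Zf i)) \<union> ((\<Union>i<N. Zf i) - (\<Union>i. A i))) < e"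
        using symdiff_union_bound[where Zf=Zf and N=N, OF f1 As1 Zs1 union.hyps(1)] sumb[OF Zf(2)] N1 Ne by linarith
      moreover have "measure M2 (((\<Union>i. A i) - (\<Union>i<N. Zf i)) \<union> ((\<Union>i<N. Zf i) - (\<Union>i. A i))) < e"
        using symdiff_union_bound[where Zf=Zf and N=N, OF f2 As2 Zs2 union.hyps(1)] sumb[OF Zf(3)] N2 Ne by linarith
      ultimately show "\<exists>Z\<in>G. measure M1 (((\<Union>i. A i) - Z) \<union> (Z - (\<Union>i. A i))) < e \<and> measure M2 (((\<Union>i. A i) - Z) \<union> (Z - (\<Union>i. A i))) < e"
        using ZG by blast
    qed
  qed
qed

definition cyl_gen :: "'i set \<Rightarrow> ('i \<Rightarrow> 'a measure) \<Rightarrow> ('i \<Rightarrow> 'a) set set" where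
  "cyl_gen I M = {prod_emb I M J X | J X. finite J \<and> J \<subseteq> I \<and> X \<in> sets (PiM J M)}"

lemma cyl_genI: "finite J \<Longrightarrow> J \<subseteq> I \<Longrightarrow> X \<in> sets (PiM J M) \<Longrightarrow> prod_emb I M J X \<in> cyl_gen I M"
  unfolding cyl_gen_def by blast

lemma algebra_cyl_gen: "algebra (space (PiM I M)) (cyl_gen I M)"
  unfolding algebra_iff_Int
proof (safe)
  fix x assume "x \<in> cyl_gen I M"
  then obtain J X where J: "finite J" "J \<subseteq> I" and X: "X \<in> sets (PiM J M)" and x: "x = prod_emb I M J X"
    unfolding cyl_gen_def by blast
  from X[THEN sets.sets_into_space] J show "y \<in> x \<Longrightarrow> y \<in> space (PiM I M)" for y
    unfolding x by (auto simp: prod_emb_def space_PiM)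
  have "prod_emb I M J (space (PiM J M) - X) \<in> cyl_gen I M"
    by (intro cyl_genI J sets.Diff sets.top X)
  with J show "space (Pi\<^sub>M I M) - x \<in> cyl_gen I M"
    unfolding x by (simp add: space_PiM prod_emb_PiE)
  fix y assume "y \<in> cyl_gen I M"
  then obtain K Y where K: "finite K" "K \<subseteq> I" and Y: "Y \<in> sets (PiM K M)" and y: "y = prod_emb I M K Y"
    unfolding cyl_gen_def by blast
  have "prod_emb I M (J \<union> K) (prod_emb (J \<union> K) M J X) \<inter> prod_emb I M (J \<union> K) (prod_emb (J \<union> K) M K Y) \<in> cyl_gen I M"
    unfolding prod_emb_Int[symmetric]
    by (intro cyl_genI sets.Int measurable_prod_emb) (auto intro!: J K X Y)
  with J K X Y show "x \<inter> y \<in> cyl_gen I M"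
    unfolding x y by simp
next
  show "{} \<in> cyl_gen I M"
    using cyl_genI[of "{}" I "{}" M] by (simp add: prod_emb_empty)
qed

lemma sets_PiM_cyl_gen: "sets (PiM I M) = sigma_sets (space (PiM I M)) (cyl_gen I M)"
proof (intro antisym sets.sigma_sets_subset)
  show "sets (PiM I M) \<subseteq> sigma_sets (space (PiM I M)) (cyl_gen I M)"
    unfolding sets_PiM_single space_PiM[symmetric]
  proof (intro sigma_sets_mono', safe)
    fix i A assume "i \<in> I" and A: "A \<in> sets (M i)"
    then have "{f \<in> space (Pi\<^sub>M I M). f i \<in> A} = prod_emb I M {i} (\<Pi>\<^sub>E j\<in>{i}. A)"
      by (auto simp: prod_emb_def space_PiM restrict_def Pi_iff PiE_iff extensional_def)
    with \<open>i\<in>I\<close> A show "{f \<in> space (Pi\<^sub>M I M). f i \<in> A} \<in> cyl_gen I M"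
      by (auto intro!: cyl_genI sets_PiM_I_finite)
  qed
qed (auto simp: cyl_gen_def)

lemma grid_sum_bound:
  fixes \<delta> :: real and t :: "nat \<Rightarrow> real" and n :: real
  assumes dl: "\<delta> > 0" and n: "n > 0"
    and t0: "t 0 = 0" and tinc: "\<And>i. i < k \<Longrightarrow> t i < t (Suc i)" and tk: "t k \<le> 1"
    and tr: "\<And>i. i \<le> k \<Longrightarrow> 0 \<le> t i"
  shows "(\<Sum>i<k. ((drift (\<lambda>x. x + \<delta>) (t (Suc i)) - drift (\<lambda>x. x + \<delta>) (t i))
                 - (drift (\<lambda>x. x + 0) (t (Suc i)) - drift (\<lambda>x. x + 0) (t i)))^2 / ((t (Suc i) - t i) / n))
     \<le> 4 * \<delta>^2 * n * (ln (1 + \<delta>) - ln \<delta>)"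
proof -
  define U where "U = (\<lambda>x. 4/3 * ((x + \<delta>) * sqrt (x + \<delta>)) - 4/3 * ((x + 0) * sqrt (x + 0)))"
  have tm: "((drift (\<lambda>x. x + \<delta>) (t (Suc i)) - drift (\<lambda>x. x + \<delta>) (t i))
                 - (drift (\<lambda>x. x + 0) (t (Suc i)) - drift (\<lambda>x. x + 0) (t i)))^2 / ((t (Suc i) - t i) / n)
        \<le> 4 * \<delta>^2 * n * (ln (t (Suc i) + \<delta>) - ln (t i + \<delta>))" if i: "i < k" for i
  proof -
    have a0: "0 \<le> t i" and ab: "t i < t (Suc i)" using tr i tinc by auto
    have b0: "0 \<le> t (Suc i)" using a0 ab by simp
    have eqd: "(drift (\<lambda>x. x + \<delta>) (t (Suc i)) - drift (\<lambda>x. x + \<delta>) (t i))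
                 - (drift (\<lambda>x. x + 0) (t (Suc i)) - drift (\<lambda>x. x + 0) (t i)) = U (t (Suc i)) - U (t i)"
    proof -
      have e1: "drift (\<lambda>x. x + \<delta>) (t (Suc i)) = 4/3 * ((t (Suc i) + \<delta>) * sqrt (t (Suc i) + \<delta>)) - 4/3 * (\<delta> * sqrt \<delta>)"
        using dl b0 by (intro drift_shift) auto
      have e2: "drift (\<lambda>x. x + \<delta>) (t i) = 4/3 * ((t i + \<delta>) * sqrt (t i + \<delta>)) - 4/3 * (\<delta> * sqrt \<delta>)"
        using dl a0 by (intro drift_shift) auto
      have e3: "drift (\<lambda>x. x + 0) (t (Suc i)) = 4/3 * ((t (Suc i) + 0) * sqrt (t (Suc i) + 0)) - 4/3 * (0 * sqrt 0)"
        using b0 by (intro drift_shift) auto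
      have e4: "drift (\<lambda>x. x + 0) (t i) = 4/3 * ((t i + 0) * sqrt (t i + 0)) - 4/3 * (0 * sqrt 0)"
        using a0 by (intro drift_shift) auto
      show ?thesis unfolding e1 e2 e3 e4 U_def by (simp add: algebra_simps)
    qed
    have ib1: "0 \<le> U (t (Suc i)) - U (t i)" and ib2: "U (t (Suc i)) - U (t i) \<le> 4 * \<delta> * (sqrt (t (Suc i) + \<delta>) - sqrt (t i + \<delta>))"
      using incr_bound[OF dl a0 less_imp_le[OF ab]] unfolding U_def by auto
    have rb: "(U (t (Suc i)) - U (t i))^2 / (t (Suc i) - t i) \<le> 4 * \<delta>^2 * (ln (t (Suc i) + \<delta>) - ln (t i + \<delta>))"
      by (rule ratio_bound[OF dl a0 ab ib1 ib2])
    have "(U (t (Suc i)) - U (t i))^2 / ((t (Suc i) - t i) / n) = n * ((U (t (Suc i)) - U (t i))^2 / (t (Suc i) - t i))"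
      using n by (simp add: field_simps)
    also have "\<dots> \<le> n * (4 * \<delta>^2 * (ln (t (Suc i) + \<delta>) - ln (t i + \<delta>)))"
      using rb n by (intro mult_left_mono) auto
    finally show ?thesis unfolding eqd by (simp add: algebra_simps)
  qed
  have "(\<Sum>i<k. ((drift (\<lambda>x. x + \<delta>) (t (Suc i)) - drift (\<lambda>x. x + \<delta>) (t i))
                 - (drift (\<lambda>x. x + 0) (t (Suc i)) - drift (\<lambda>x. x + 0) (t i)))^2 / ((t (Suc i) - t i) / n))
      \<le> (\<Sum>i<k. 4 * \<delta>^2 * n * (ln (t (Suc i) + \<delta>) - ln (t i + \<delta>)))"
    using tm by (intro sum_mono) auto
  also have "\<dots> = 4 * \<delta>^2 * n * (\<Sum>i<k. ln (t (Suc i) + \<delta>) - ln (t i + \<delta>))"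
    by (simp add: sum_distrib_left)
  also have "(\<Sum>i<k. ln (t (Suc i) + \<delta>) - ln (t i + \<delta>)) = ln (t k + \<delta>) - ln (t 0 + \<delta>)"
    by (rule sum_lessThan_telescope)
  also have "ln (t k + \<delta>) - ln (t 0 + \<delta>) \<le> ln (1 + \<delta>) - ln \<delta>"
    using t0 tk tr[of k] dl by simp
  hence "4 * \<delta>^2 * n * (ln (t k + \<delta>) - ln (t 0 + \<delta>)) \<le> 4 * \<delta>^2 * n * (ln (1 + \<delta>) - ln \<delta>)"
    using n by (intro mult_left_mono) auto
  finally show ?thesis by simp
qed

lemma numeric_bound:
  fixes n :: nat assumes n: "n \<ge> 3"
  defines "\<delta> \<equiv> (real n * ln (real n)) powr (-1/2)"
  shows "\<delta> > 0" "\<delta> \<le> 1" "4 * \<delta>^2 * real n * (ln (1 + \<delta>) - ln \<delta>) \<le> 8"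
    "\<delta> \<le> real n powr (-1/2)"
proof -
  have n1: "real n \<ge> 3" using n by simp
  have ln1: "ln (real n) \<ge> 1"
  proof -
    have "exp 1 \<le> (3::real)" using exp_le by simp
    hence "exp 1 \<le> real n" using n1 by simp
    thus ?thesis using n1 by (simp add: ln_ge_iff)
  qed
  define m where "m = real n * ln (real n)"
  have m1: "m \<ge> 3" unfolding m_def using mult_mono[of 3 "real n" 1 "ln (real n)"] n1 ln1 by simp
  have mpos: "m > 0" using m1 by simp
  have dd: "\<delta> = m powr (-1/2)" unfolding \<delta>_def m_def ..
  show dpos: "\<delta> > 0" unfolding dd using mpos by simp
  have "m powr (-1/2) = 1 / (m powr (1/2))" using powr_minus_divide[of m "1/2"] by simp
  also have "m powr (1/2) = sqrt m" using mpos by (simp add: powr_half_sqrt)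
  finally have d2: "\<delta> = 1 / sqrt m" unfolding dd .
  have sq: "\<delta>^2 = 1 / m" unfolding d2 using mpos by (simp add: power_divide)
  have inv: "1 / \<delta> = sqrt m" unfolding d2 by simp
  have "1 \<le> sqrt m" using m1 by simp
  thus "\<delta> \<le> 1" unfolding d2 by simp
  have lnn: "ln (real n) \<le> real n" using ln_le_minus_one[of "real n"] n1 by simp
  have "m \<le> real n * real n" unfolding m_def using lnn n1 by (intro mult_left_mono) auto
  hence "sqrt m \<le> sqrt (real n * real n)" by (rule real_sqrt_le_mono)
  hence sm: "sqrt m \<le> real n" by simp
  have "ln (1 + \<delta>) - ln \<delta> = ln ((1 + \<delta>) / \<delta>)" using dpos by (simp add: ln_div)
  also have "(1 + \<delta>) / \<delta> = 1 + sqrt m" using dpos inv by (simp add: field_simps)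
  also have "ln (1 + sqrt m) \<le> ln (real n * real n)"
  proof -
    have "real n * real n \<ge> 3 * real n" using n1 by (intro mult_right_mono) auto
    hence "1 + sqrt m \<le> real n * real n" using sm n1 by linarith
    moreover have "1 + sqrt m > 0" using mpos by (simp add: add_pos_nonneg)
    ultimately show ?thesis by simp
  qed
  also have "ln (real n * real n) = 2 * ln (real n)" using n1 by (simp add: ln_mult)
  finally have L: "ln (1 + \<delta>) - ln \<delta> \<le> 2 * ln (real n)" .
  have "4 * \<delta>^2 * real n = 4 / ln (real n)" unfolding sq m_def using n1 ln1 by (simp add: field_simps)
  hence "4 * \<delta>^2 * real n * (ln (1 + \<delta>) - ln \<delta>) = 4 / ln (real n) * (ln (1 + \<delta>) - ln \<delta>)"
    by simp
  also have "\<dots> \<le> 4 / ln (real n) * (2 * ln (real n))"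
    using ln1 by (intro mult_left_mono[OF L]) simp
  also have "\<dots> = 8" using ln1 by simp
  finally show "4 * \<delta>^2 * real n * (ln (1 + \<delta>) - ln \<delta>) \<le> 8" .
  show "\<delta> \<le> real n powr (-1/2)"
    unfolding \<delta>_def using n1 ln1 by (intro powr_mono2') (auto simp: mult_le_cancel_left1 )
qed

lemma sqrt_prod: "sqrt (prod f A) = (\<Prod>i\<in>A. sqrt (f i))"
  by (induction A rule: infinite_finite_induct) (auto simp: real_sqrt_mult)

lemma cyl_bound:
  fixes P0 P1 :: "(real \<Rightarrow> real) measure" and n :: nat and \<delta> :: real
  assumes n: "n \<ge> 1" and dl: "\<delta> > 0" and bnd: "4 * \<delta>^2 * real n * (ln (1 + \<delta>) - ln \<delta>) \<le> 8"
    and law0: "is_data_law n (\<lambda>x. x + 0) P0" and law1: "is_data_law n (\<lambda>x. x + \<delta>) P1"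
    and J: "finite J" "J \<subseteq> {0..1}" and X: "X \<in> sets (PiM J (\<lambda>_. borel :: real measure))"
  shows "measure P0 (prod_emb {0..1} (\<lambda>_. borel) J X) + measure P1 (space P1 - prod_emb {0..1} (\<lambda>_. borel) J X) \<ge> 3/(8*exp 2)"
proof -
  define xs where "xs = sorted_list_of_set (insert 0 (insert 1 J))"
  define k where "k = length xs - 1"
  define t where "t = (\<lambda>i. xs ! i)"
  define pos where "pos = (\<lambda>s. SOME m. m < length xs \<and> xs ! m = s)"
  note gp = grid_props[OF J, folded xs_def]
  have k: "k \<ge> 1" unfolding k_def using gp(1) by simp
  have lenk: "length xs = Suc k" unfolding k_def using gp(1) by simp
  have t0: "t 0 = 0" unfolding t_def using gp(2) .
  have tinc: "\<And>i. i < k \<Longrightarrow> t i < t (Suc i)" unfolding t_def using gp(3) lenk by simp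
  have tr: "\<And>i. i \<le> k \<Longrightarrow> 0 \<le> t i \<and> t i \<le> 1" unfolding t_def using gp(4) lenk by simp
  have tk: "t k \<le> 1" using tr by simp
  have pos: "\<And>s. s \<in> J \<Longrightarrow> pos s \<le> k \<and> t (pos s) = s"
  proof -
    fix s assume s: "s \<in> J"
    have "pos s < length xs \<and> xs ! (pos s) = s" unfolding pos_def using gp(5)[OF s] by (rule someI_ex)
    thus "pos s \<le> k \<and> t (pos s) = s" unfolding t_def using lenk by simp
  qed
  define \<Phi> where "\<Phi> = (\<lambda>d::nat\<Rightarrow>real. \<lambda>s\<in>J. \<Sum>i<pos s. d i)"
  define S where "S = \<Phi> -` X \<inter> space (PiM {..<k} (\<lambda>_. borel :: real measure))"
  define \<sigma> where "\<sigma> = (\<lambda>i. sqrt ((t (Suc i) - t i) / real n))"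
  define m0 where "m0 = (\<lambda>i. drift (\<lambda>x. x + 0) (t (Suc i)) - drift (\<lambda>x. x + 0) (t i))"
  define m1 where "m1 = (\<lambda>i. drift (\<lambda>x. x + \<delta>) (t (Suc i)) - drift (\<lambda>x. x + \<delta>) (t i))"
  define g0 where "g0 = (\<lambda>i x. normal_density (m0 i) (\<sigma> i) x)"
  define g1 where "g1 = (\<lambda>i x. normal_density (m1 i) (\<sigma> i) x)"
  define N where "N = PiM {..<k} (\<lambda>_. lborel :: real measure)"
  let ?Z = "prod_emb {0..1} (\<lambda>_. borel) J X"
  have sig: "\<And>i. i < k \<Longrightarrow> \<sigma> i > 0" unfolding \<sigma>_def using tinc n by simp
  have c0: "emeasure P0 ?Z = emeasure (PiM {..<k} (\<lambda>i. density lborel (\<lambda>x. ennreal (g0 i x)))) S"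
    unfolding S_def g0_def m0_def \<sigma>_def \<Phi>_def by (rule cyl_law[OF law0 J X k t0 tinc tk tr pos])
  have c1: "emeasure P1 ?Z = emeasure (PiM {..<k} (\<lambda>i. density lborel (\<lambda>x. ennreal (g1 i x)))) S"
    unfolding S_def g1_def m1_def \<sigma>_def \<Phi>_def by (rule cyl_law[OF law1 J X k t0 tinc tk tr pos])
  have Q0: "PiM {..<k} (\<lambda>i. density lborel (\<lambda>x. ennreal (g0 i x))) = density N (\<lambda>x. ennreal (\<Prod>i\<in>{..<k}. g0 i (x i)))"
    unfolding N_def by (rule PiM_density_prod) (auto simp: g0_def intro!: prob_space_normal_density sig)
  have Q1: "PiM {..<k} (\<lambda>i. density lborel (\<lambda>x. ennreal (g1 i x))) = density N (\<lambda>x. ennreal (\<Prod>i\<in>{..<k}. g1 i (x i)))"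
    unfolding N_def by (rule PiM_density_prod) (auto simp: g1_def intro!: prob_space_normal_density sig)
  have ps0: "prob_space (density N (\<lambda>x. ennreal (\<Prod>i\<in>{..<k}. g0 i (x i))))"
    unfolding Q0[symmetric] by (intro prob_space_PiM) (auto simp: g0_def intro!: prob_space_normal_density sig)
  have ps1: "prob_space (density N (\<lambda>x. ennreal (\<Prod>i\<in>{..<k}. g1 i (x i))))"
    unfolding Q1[symmetric] by (intro prob_space_PiM) (auto simp: g1_def intro!: prob_space_normal_density sig)
  have sN: "sets N = sets (PiM {..<k} (\<lambda>_. borel :: real measure))"
    unfolding N_def by (rule sets_PiM_cong) auto
  have spN: "space N = space (PiM {..<k} (\<lambda>_. borel :: real measure))"
    using sN by (rule sets_eq_imp_space_eq)
  have Phim: "\<Phi> \<in> measurable (PiM {..<k} (\<lambda>_. borel :: real measure)) (PiM J (\<lambda>_. borel))"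
    unfolding \<Phi>_def
  proof (intro measurable_restrict borel_measurable_sum)
    fix s i assume s: "s \<in> J" and i: "i \<in> {..<pos s}"
    hence "i \<in> {..<k}" using pos[OF s] by auto
    thus "(\<lambda>x. x i) \<in> borel_measurable (PiM {..<k} (\<lambda>_. borel :: real measure))"
      by (rule measurable_component_singleton)
  qed
  have Ss: "S \<in> sets N" unfolding sN S_def using measurable_sets[OF Phim X] .
  have sumb: "(\<Sum>i<k. (m0 i - m1 i)^2 / (8 * (\<sigma> i)^2)) \<le> 1"
  proof -
    have "(\<Sum>i<k. (m0 i - m1 i)^2 / (8 * (\<sigma> i)^2)) = (\<Sum>i<k. (m1 i - m0 i)^2 / ((t (Suc i) - t i) / real n)) / 8"
      unfolding sum_divide_distrib
    proof (intro sum.cong refl)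
      fix i assume "i \<in> {..<k}"
      hence "t i < t (Suc i)" using tinc by simp
      hence "0 \<le> (t (Suc i) - t i) / real n" by simp
      hence "(\<sigma> i)^2 = (t (Suc i) - t i) / real n" unfolding \<sigma>_def by simp
      moreover have "(m0 i - m1 i)^2 = (m1 i - m0 i)^2" by (simp add: power2_commute)
      ultimately show "(m0 i - m1 i)^2 / (8 * (\<sigma> i)^2) = (m1 i - m0 i)^2 / ((t (Suc i) - t i) / real n) / 8"
        by simp
    qed
    also have "(\<Sum>i<k. (m1 i - m0 i)^2 / ((t (Suc i) - t i) / real n)) \<le> 4 * \<delta>^2 * real n * (ln (1 + \<delta>) - ln \<delta>)"
      unfolding m0_def m1_def using n by (intro grid_sum_bound dl t0 tinc tk) (use tr in auto)
    finally show ?thesis using bnd by simp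
  qed
  have rho: "(\<integral>\<^sup>+ x. ennreal (sqrt ((\<Prod>i\<in>{..<k}. g0 i (x i)) * (\<Prod>i\<in>{..<k}. g1 i (x i)))) \<partial>N) \<ge> ennreal (exp (-1))"
  proof -
    interpret pl: product_sigma_finite "\<lambda>_::nat. lborel :: real measure"
      unfolding product_sigma_finite_def using lborel.sigma_finite_measure_axioms by auto
    have "(\<integral>\<^sup>+ x. ennreal (sqrt ((\<Prod>i\<in>{..<k}. g0 i (x i)) * (\<Prod>i\<in>{..<k}. g1 i (x i)))) \<partial>N)
        = (\<integral>\<^sup>+ x. (\<Prod>i\<in>{..<k}. ennreal (sqrt (g0 i (x i) * g1 i (x i)))) \<partial>N)"
      by (intro nn_integral_cong) (simp add: prod.distrib[symmetric] sqrt_prod prod_ennreal g0_def g1_def)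
    also have "\<dots> = (\<Prod>i\<in>{..<k}. \<integral>\<^sup>+ y. ennreal (sqrt (g0 i y * g1 i y)) \<partial>lborel)"
      unfolding N_def by (intro pl.product_nn_integral_prod) (auto simp: g0_def g1_def)
    also have "\<dots> = (\<Prod>i\<in>{..<k}. ennreal (exp (- ((m0 i - m1 i)^2) / (8 * (\<sigma> i)^2))))"
      unfolding g0_def g1_def by (intro prod.cong refl affinity_normal sig) auto
    also have "\<dots> = ennreal (exp (- (\<Sum>i<k. (m0 i - m1 i)^2 / (8 * (\<sigma> i)^2))))"
      by (simp add: prod_ennreal exp_sum[symmetric] sum_negf)
    finally have eq: "(\<integral>\<^sup>+ x. ennreal (sqrt ((\<Prod>i\<in>{..<k}. g0 i (x i)) * (\<Prod>i\<in>{..<k}. g1 i (x i)))) \<partial>N)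
       = ennreal (exp (- (\<Sum>i<k. (m0 i - m1 i)^2 / (8 * (\<sigma> i)^2))))" .
    have "exp (- (\<Sum>i<k. (m0 i - m1 i)^2 / (8 * (\<sigma> i)^2))) \<ge> exp (-1)"
      using sumb by simp
    thus ?thesis unfolding eq by (rule ennreal_leI)
  qed
  have tb: "measure (density N (\<lambda>x. ennreal (\<Prod>i\<in>{..<k}. g0 i (x i)))) S + measure (density N (\<lambda>x. ennreal (\<Prod>i\<in>{..<k}. g1 i (x i)))) (space N - S) \<ge> 3/(8*exp 2)"
    by (rule test_bound[OF _ _ _ _ ps0 ps1 Ss rho]) (auto simp: N_def g0_def g1_def intro!: prod_nonneg)
  interpret P0: prob_space P0 using law0 unfolding is_data_law_def by blast
  interpret P1: prob_space P1 using law1 unfolding is_data_law_def by blast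
  interpret QQ1: prob_space "density N (\<lambda>x. ennreal (\<Prod>i\<in>{..<k}. g1 i (x i)))" by (rule ps1)
  have sP1: "sets P1 = sets data_space" using law1 unfolding is_data_law_def by blast
  have Zs: "?Z \<in> sets P1" unfolding sP1 data_space_def using J X by simp
  have m0eq: "measure P0 ?Z = measure (density N (\<lambda>x. ennreal (\<Prod>i\<in>{..<k}. g0 i (x i)))) S"
    using c0 unfolding Q0 by (simp add: measure_def)
  have m1eq: "measure P1 ?Z = measure (density N (\<lambda>x. ennreal (\<Prod>i\<in>{..<k}. g1 i (x i)))) S"
    using c1 unfolding Q1 by (simp add: measure_def)
  have "measure P1 (space P1 - ?Z) = 1 - measure P1 ?Z" using Zs by (rule P1.prob_compl)
  also have "\<dots> = 1 - measure (density N (\<lambda>x. ennreal (\<Prod>i\<in>{..<k}. g1 i (x i)))) S" using m1eq by simp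
  also have "\<dots> = measure (density N (\<lambda>x. ennreal (\<Prod>i\<in>{..<k}. g1 i (x i)))) (space N - S)"
    using QQ1.prob_compl[of S] Ss by simp
  finally show ?thesis using tb m0eq by simp
qed

lemma meas_sym_le:
  assumes fm: "finite_measure M" and A: "A \<in> sets M" and Z: "Z \<in> sets M"
  shows "measure M Z \<le> measure M A + measure M ((A - Z) \<union> (Z - A))"
proof -
  interpret finite_measure M by (rule fm)
  have "measure M Z \<le> measure M (A \<union> ((A - Z) \<union> (Z - A)))"
    using A Z by (intro finite_measure_mono) auto
  also have "\<dots> \<le> measure M A + measure M ((A - Z) \<union> (Z - A))"
    using A Z by (intro measure_Un_le) auto
  finally show ?thesis .
qed

lemma test_all:
  fixes P0 P1 :: "(real \<Rightarrow> real) measure" and n :: nat and \<delta> :: real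
  assumes n: "n \<ge> 1" and dl: "\<delta> > 0" and bnd: "4 * \<delta>^2 * real n * (ln (1 + \<delta>) - ln \<delta>) \<le> 8"
    and law0: "is_data_law n (\<lambda>x. x + 0) P0" and law1: "is_data_law n (\<lambda>x. x + \<delta>) P1"
    and A: "A \<in> sets data_space"
  shows "measure P0 A + measure P1 (space data_space - A) \<ge> 3/(8*exp 2)"
proof -
  let ?\<Omega> = "space data_space" and ?G = "cyl_gen {0..1} (\<lambda>_. borel :: real measure)"
  let ?c = "3/(8*exp 2) :: real"
  have sP0: "sets P0 = sets data_space" and sP1: "sets P1 = sets data_space"
    using law0 law1 unfolding is_data_law_def by blast+
  interpret P0: prob_space P0 using law0 unfolding is_data_law_def by blast
  interpret P1: prob_space P1 using law1 unfolding is_data_law_def by blast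
  have spP1: "space P1 = ?\<Omega>" using sP1 by (rule sets_eq_imp_space_eq)
  have sG: "sets data_space = sigma_sets ?\<Omega> ?G" unfolding data_space_def by (rule sets_PiM_cyl_gen)
  have alg: "algebra ?\<Omega> ?G" unfolding data_space_def by (rule algebra_cyl_gen)
  have ap: "\<forall>e>0. \<exists>Z\<in>?G. measure P0 ((A - Z) \<union> (Z - A)) < e \<and> measure P1 ((A - Z) \<union> (Z - A)) < e"
    by (rule approx2[OF alg sP0[unfolded sG] sP1[unfolded sG]])
       (auto intro: P0.finite_measure_axioms P1.finite_measure_axioms simp: A[unfolded sG])
  show ?thesis
  proof (rule field_le_epsilon)
    fix e :: real assume e: "e > 0"
    from ap e obtain Z where Z: "Z \<in> ?G" and z0: "measure P0 ((A - Z) \<union> (Z - A)) < e/2"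
      and z1: "measure P1 ((A - Z) \<union> (Z - A)) < e/2" by (meson half_gt_zero)
    from Z obtain J X where J: "finite J" "J \<subseteq> {0..1}" and X: "X \<in> sets (PiM J (\<lambda>_. borel :: real measure))"
      and Zd: "Z = prod_emb {0..1} (\<lambda>_. borel) J X" unfolding cyl_gen_def by blast
    have cb: "measure P0 Z + measure P1 (space P1 - Z) \<ge> ?c"
      unfolding Zd by (rule cyl_bound[OF n dl bnd law0 law1 J X])
    have Zs: "Z \<in> sets data_space" unfolding sG using Z by auto
    have "measure P0 Z \<le> measure P0 A + measure P0 ((A - Z) \<union> (Z - A))"
      using meas_sym_le[OF P0.finite_measure_axioms, of A Z] A Zs sP0 by simp
    moreover have "measure P1 (?\<Omega> - Z) \<le> measure P1 (?\<Omega> - A) + measure P1 ((A - Z) \<union> (Z - A))"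
    proof -
      have "measure P1 (?\<Omega> - Z) \<le> measure P1 (?\<Omega> - A) + measure P1 (((?\<Omega> - A) - (?\<Omega> - Z)) \<union> ((?\<Omega> - Z) - (?\<Omega> - A)))"
        using meas_sym_le[OF P1.finite_measure_axioms, of "?\<Omega> - A" "?\<Omega> - Z"] A Zs sP1 by auto
      also have "measure P1 (((?\<Omega> - A) - (?\<Omega> - Z)) \<union> ((?\<Omega> - Z) - (?\<Omega> - A))) \<le> measure P1 ((A - Z) \<union> (Z - A))"
        using A Zs sP1 by (intro P1.finite_measure_mono) auto
      finally show ?thesis by simp
    qed
    ultimately show "?c \<le> measure P0 A + measure P1 (?\<Omega> - A) + e"
      using cb[unfolded spP1] z0 z1 by linarith
  qed
qed

theorem theorem3p3:
  fixes P :: "nat \<Rightarrow> (real \<Rightarrow> real) \<Rightarrow> (real \<Rightarrow> real) measure"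
  assumes "\<And>n f. n \<ge> 1 \<Longrightarrow> f \<in> affine_class \<Longrightarrow> is_data_law n f (P n f)"
  shows "\<exists>C>0. liminf (\<lambda>n.
            INF fhat \<in> borel_measurable data_space.
              SUP f \<in> {f \<in> affine_class. f 0 \<le> (real n) powr (-1/2)}.
                ereal (measure (P n f)
                  {\<omega> \<in> space (P n f).
                     \<bar>fhat \<omega> - f 0\<bar> / ((real n * ln (real n)) powr (-1/2)) \<ge> C}))
          > 0"
proof (intro exI[of _ "1/2"] conjI)
  let ?c = "3/(8*exp 2) :: real"
  have cpos: "?c > 0" by simp
  have ev: "ereal (?c/2) \<le> (INF fhat \<in> borel_measurable data_space.
              SUP f \<in> {f \<in> affine_class. f 0 \<le> (real n) powr (-1/2)}.
                ereal (measure (P n f)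
                  {\<omega> \<in> space (P n f).
                     \<bar>fhat \<omega> - f 0\<bar> / ((real n * ln (real n)) powr (-1/2)) \<ge> 1/2}))"
    if n3: "n \<ge> 3" for n
  proof (rule INF_greatest)
    fix fhat :: "(real \<Rightarrow> real) \<Rightarrow> real" assume fm: "fhat \<in> borel_measurable data_space"
    define \<delta> where "\<delta> = (real n * ln (real n)) powr (-1/2)"
    have dpos: "\<delta> > 0" and d1: "\<delta> \<le> 1" and bnd: "4 * \<delta>^2 * real n * (ln (1 + \<delta>) - ln \<delta>) \<le> 8"
      and dn: "\<delta> \<le> real n powr (-1/2)"
      using numeric_bound[OF n3] unfolding \<delta>_def by auto
    have n1: "n \<ge> 1" using n3 by simp
    let ?f0 = "\<lambda>x::real. x + 0" and ?f1 = "\<lambda>x::real. x + \<delta>"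
    have f0A: "?f0 \<in> affine_class" unfolding affine_class_def
      by (intro CollectI exI[of _ 1] exI[of _ 0]) auto
    have f1A: "?f1 \<in> affine_class" unfolding affine_class_def
      using dpos d1 by (intro CollectI exI[of _ 1] exI[of _ \<delta>]) auto
    have f0F: "?f0 \<in> {f \<in> affine_class. f 0 \<le> (real n) powr (-1/2)}" using f0A by simp
    have f1F: "?f1 \<in> {f \<in> affine_class. f 0 \<le> (real n) powr (-1/2)}" using f1A dn by simp
    have law0: "is_data_law n ?f0 (P n ?f0)" using assms n1 f0A by blast
    have law1: "is_data_law n ?f1 (P n ?f1)" using assms n1 f1A by blast
    have sP0: "sets (P n ?f0) = sets data_space" and sP1: "sets (P n ?f1) = sets data_space"
      using law0 law1 unfolding is_data_law_def by blast+
    have spP0: "space (P n ?f0) = space data_space" using sP0 by (rule sets_eq_imp_space_eq)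
    have spP1: "space (P n ?f1) = space data_space" using sP1 by (rule sets_eq_imp_space_eq)
    interpret P1: prob_space "P n ?f1" using law1 unfolding is_data_law_def by blast
    define A where "A = {\<omega> \<in> space data_space. \<bar>fhat \<omega> - 0\<bar> / \<delta> \<ge> 1/2}"
    define B where "B = {\<omega> \<in> space data_space. \<bar>fhat \<omega> - \<delta>\<bar> / \<delta> \<ge> 1/2}"
    have Am: "A \<in> sets data_space" unfolding A_def using fm by measurable
    have Bm: "B \<in> sets data_space" unfolding B_def using fm by measurable
    have ta: "measure (P n ?f0) A + measure (P n ?f1) (space data_space - A) \<ge> ?c"
      by (rule test_all[OF n1 dpos bnd law0 law1 Am])
    have sub: "space data_space - A \<subseteq> B"
    proof
      fix \<omega> assume w: "\<omega> \<in> space data_space - A"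
      hence "\<bar>fhat \<omega>\<bar> / \<delta> < 1/2" unfolding A_def by auto
      hence "\<bar>fhat \<omega>\<bar> < \<delta>/2" using dpos by (simp add: divide_less_eq)
      hence "\<bar>fhat \<omega> - \<delta>\<bar> \<ge> \<delta>/2" by linarith
      hence "\<bar>fhat \<omega> - \<delta>\<bar> / \<delta> \<ge> 1/2" using dpos by (simp add: le_divide_eq)
      thus "\<omega> \<in> B" using w unfolding B_def by auto
    qed
    have "measure (P n ?f1) (space data_space - A) \<le> measure (P n ?f1) B"
      using sub Bm sP1 by (intro P1.finite_measure_mono) auto
    with ta have sumAB: "measure (P n ?f0) A + measure (P n ?f1) B \<ge> ?c" by linarith
    have eA: "{\<omega> \<in> space (P n ?f0). \<bar>fhat \<omega> - ?f0 0\<bar> / ((real n * ln (real n)) powr (-1/2)) \<ge> 1/2} = A"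
      by (subst spP0) (simp add: A_def \<delta>_def)
    have eB: "{\<omega> \<in> space (P n ?f1). \<bar>fhat \<omega> - ?f1 0\<bar> / ((real n * ln (real n)) powr (-1/2)) \<ge> 1/2} = B"
      by (subst spP1) (simp add: B_def \<delta>_def)
    let ?S = "SUP f \<in> {f \<in> affine_class. f 0 \<le> (real n) powr (-1/2)}.
                ereal (measure (P n f)
                  {\<omega> \<in> space (P n f).
                     \<bar>fhat \<omega> - f 0\<bar> / ((real n * ln (real n)) powr (-1/2)) \<ge> 1/2})"
    have SA: "ereal (measure (P n ?f0) A) \<le> ?S"
      using SUP_upper[OF f0F, of "\<lambda>f. ereal (measure (P n f) {\<omega> \<in> space (P n f).
                     \<bar>fhat \<omega> - f 0\<bar> / ((real n * ln (real n)) powr (-1/2)) \<ge> 1/2})"] eA by simp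
    have SB: "ereal (measure (P n ?f1) B) \<le> ?S"
      using SUP_upper[OF f1F, of "\<lambda>f. ereal (measure (P n f) {\<omega> \<in> space (P n f).
                     \<bar>fhat \<omega> - f 0\<bar> / ((real n * ln (real n)) powr (-1/2)) \<ge> 1/2})"] eB by simp
    show "ereal (?c/2) \<le> ?S"
    proof (cases "measure (P n ?f0) A \<ge> ?c/2")
      case True
      hence "ereal (?c/2) \<le> ereal (measure (P n ?f0) A)" by simp
      thus ?thesis using SA by (rule order_trans)
    next
      case False
      hence "measure (P n ?f1) B \<ge> ?c/2" using sumAB by linarith
      hence "ereal (?c/2) \<le> ereal (measure (P n ?f1) B)" by simp
      thus ?thesis using SB by (rule order_trans)
    qed
  qed
  have "ereal (?c/2) \<le> liminf (\<lambda>n. INF fhat \<in> borel_measurable data_space.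
              SUP f \<in> {f \<in> affine_class. f 0 \<le> (real n) powr (-1/2)}.
                ereal (measure (P n f)
                  {\<omega> \<in> space (P n f).
                     \<bar>fhat \<omega> - f 0\<bar> / ((real n * ln (real n)) powr (-1/2)) \<ge> 1/2}))"
    by (rule Liminf_bounded) (use ev in \<open>auto simp: eventually_sequentially intro!: exI[of _ 3]\<close>)
  moreover have "0 < ereal (?c/2)" using cpos by simp
  ultimately show "liminf (\<lambda>n. INF fhat \<in> borel_measurable data_space.
              SUP f \<in> {f \<in> affine_class. f 0 \<le> (real n) powr (-1/2)}.
                ereal (measure (P n f)
                  {\<omega> \<in> space (P n f).
                     \<bar>fhat \<omega> - f 0\<bar> / ((real n * ln (real n)) powr (-1/2)) \<ge> 1/2})) > 0"
    by (rule order.strict_trans2[rotated])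
qed simp

end
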